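(* Let $|\Phi^+\rangle=\frac1{\sqrt2}(|00\rangle+|11\rangle)$. For a POVM $\{\mathrm B'_b\}_{b=1}^m$ on $\mathbb C^2$ and $\eta\in[0,1]$ let its lossy version be $\{\eta\mathrm B'_1,\dots,\eta\mathrm B'_m,(1-\eta)I\}$ (the last element being the no-click outcome $\varnothing$). (1) If $\eta\le 1/4$, then the correlations $\langle\Phi^+|\mathrm A_{a|\boldsymbol x}\otimes\mathrm B_b|\Phi^+\rangle$, where Alice performs any projective qubit measurement $\mathrm A_{a|\boldsymbol x}=\frac12(I+a\,\boldsymbol x\cdot\boldsymbol\sigma)$ ($\boldsymbol x\in\mathbb R^3$ unit, $a=\pm1$) and Bob performs the lossy version of any finite-outcome POVM on $\mathbb C^2$, admit a single local hidden variable model (valid for all measurement choices of both parties). (2) If $\eta\le 1/\pi$, the same holds when Alice's measurements are restricted to the $X$–$Z$ plane, $\mathrm A_{a|\varphi}=\frac12(I+a(\cos\varphi Z+\sin\varphi X))$, $\varphi\in[0,2\pi)$.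
   Context: $\boldsymbol\sigma=(X,Y,Z)$ are the Pauli matrices. A local hidden variable model for a family of correlations $p(a,b|\mathrm{settings})$ consists of a probability space $(\Lambda,\mu)$ and measurable response functions $p_A(a|\text{Alice's setting},\lambda)$, $p_B(b|\text{Bob's setting},\lambda)$ with $p(a,b|\cdot)=\int p_A\,p_B\,d\mu$ for all settings and outcomes. *)

theory Defs
  imports "HOL-Analysis.Analysis" "HOL-Probability.Probability"
begin

type_synonym qmat = "complex^2^2"   (* operators on C^2, indices 1,2 *)
type_synonym qvec = "complex^2"

definition pauliX :: qmat where "pauliX = vector [vector [0, 1], vector [1, 0]]"
definition pauliY :: qmat where "pauliY = vector [vector [0, - \<i>], vector [\<i>, 0]]"
definition pauliZ :: qmat where "pauliZ = vector [vector [1, 0], vector [0, -1]]"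

definition kron :: "qmat \<Rightarrow> qmat \<Rightarrow> complex^(2\<times>2)^(2\<times>2)" where
  "kron A B = (\<chi> p q. A$(fst p)$(fst q) * B$(snd p)$(snd q))"

text \<open>|Phi+> = (|00> + |11>)/sqrt 2 (basis states |0>,|1> are indices 1,2).\<close>
definition phi_plus :: "complex^(2\<times>2)" where
  "phi_plus = (\<chi> p. if fst p = snd p then complex_of_real (1 / sqrt 2) else 0)"

definition braket :: "complex^'n \<Rightarrow> complex^'n \<Rightarrow> complex" where
  "braket u v = (\<Sum>i\<in>UNIV. cnj (u$i) * v$i)"

definition bell_corr :: "qmat \<Rightarrow> qmat \<Rightarrow> complex" where
  "bell_corr A B = braket phi_plus (kron A B *v phi_plus)"

definition qpsd :: "qmat \<Rightarrow> bool" where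
  "qpsd A \<longleftrightarrow> (\<forall>v::qvec. Im (braket v (A *v v)) = 0 \<and> 0 \<le> Re (braket v (A *v v)))"

definition is_povm :: "nat \<Rightarrow> (nat \<Rightarrow> qmat) \<Rightarrow> bool" where
  "is_povm m B \<longleftrightarrow> (\<forall>b<m. qpsd (B b)) \<and> (\<Sum>b<m. B b) = mat 1"

text \<open>Outcomes of the lossy version: Some b (click with outcome b), None (no click).\<close>
definition lossy_outcomes :: "nat \<Rightarrow> nat option set" where
  "lossy_outcomes m = insert None (Some ` {..<m})"

definition lossy :: "real \<Rightarrow> (nat \<Rightarrow> qmat) \<Rightarrow> nat option \<Rightarrow> qmat" where
  "lossy \<eta> B ob = (case ob of Some b \<Rightarrow> \<eta> *\<^sub>R B b | None \<Rightarrow> (1 - \<eta>) *\<^sub>R mat 1)"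

definition alice_proj :: "real^3 \<Rightarrow> real \<Rightarrow> qmat" where
  "alice_proj x a = (1/2) *\<^sub>R (mat 1 + a *\<^sub>R (x$1 *\<^sub>R pauliX + x$2 *\<^sub>R pauliY + x$3 *\<^sub>R pauliZ))"

definition alice_xz :: "real \<Rightarrow> real \<Rightarrow> qmat" where
  "alice_xz \<phi> a = (1/2) *\<^sub>R (mat 1 + a *\<^sub>R (cos \<phi> *\<^sub>R pauliZ + sin \<phi> *\<^sub>R pauliX))"

text \<open>The hidden variable ranges over the fixed type real^3 (with any sigma-algebra / probability
  measure); response functions are measurable and are probability distributions over outcomes.\<close>
definition lhv_lossy :: "'s set \<Rightarrow> ('s \<Rightarrow> real \<Rightarrow> qmat) \<Rightarrow> real \<Rightarrow> bool" where
  "lhv_lossy SA Aop \<eta> \<longleftrightarrow>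
    (\<exists>(M :: (real^3) measure) (pA :: 's \<Rightarrow> real \<Rightarrow> real^3 \<Rightarrow> real)
       (pB :: nat \<Rightarrow> (nat \<Rightarrow> qmat) \<Rightarrow> nat option \<Rightarrow> real^3 \<Rightarrow> real).
      prob_space M \<and>
      (\<forall>s\<in>SA. (\<forall>a\<in>{1, -1}. pA s a \<in> borel_measurable M) \<and>
         (\<forall>l\<in>space M. (\<forall>a\<in>{1, -1}. 0 \<le> pA s a l) \<and> pA s 1 l + pA s (-1) l = 1)) \<and>
      (\<forall>m B. is_povm m B \<longrightarrow>
         (\<forall>ob\<in>lossy_outcomes m. pB m B ob \<in> borel_measurable M) \<and>
         (\<forall>l\<in>space M. (\<forall>ob\<in>lossy_outcomes m. 0 \<le> pB m B ob l) \<and>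
                       (\<Sum>ob\<in>lossy_outcomes m. pB m B ob l) = 1)) \<and>
      (\<forall>s\<in>SA. \<forall>a\<in>{1, -1}. \<forall>m B. is_povm m B \<longrightarrow> (\<forall>ob\<in>lossy_outcomes m.
         bell_corr (Aop s a) (lossy \<eta> B ob) =
           complex_of_real (\<integral>l. pA s a l * pB m B ob l \<partial>M))))"

end

theory Submission
  imports Defs
begin


definition UM :: "(real^3) measure" where "UM = uniform_measure lborel (ball 0 1)"

lemma sets_UM[simp, measurable_cong]: "sets UM = sets borel"
  by (simp add: UM_def)
lemma space_UM[simp]: "space UM = UNIV"
  by (simp add: UM_def)

lemma prob_UM: "prob_space UM"
  unfolding UM_def
proof (rule prob_space_uniform_measure)
  show "emeasure lborel (ball (0::real^3) 1) \<noteq> \<infinity>"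
    using emeasure_lborel_ball_finite by (simp add: less_top)
  have "measure lborel (ball (0::real^3) 1) > 0" using content_ball_pos[of 1 "0::real^3"] by simp
  then show "emeasure lborel (ball (0::real^3) 1) \<noteq> 0"
    by (metis emeasure_lborel_ball_finite measure_def enn2real_positive_iff infinity_ennreal_def le_zero_eq not_gr_zero)
qed

lemma lborel_orth_preimage:
  fixes f :: "real^3 \<Rightarrow> real^3"
  assumes f: "orthogonal_transformation f" and S: "S \<in> sets borel" and b: "bounded S"
  shows "emeasure lborel (f -` S) = emeasure lborel S"
proof -
  have lin: "linear f" using f orthogonal_transformation_linear by blast
  have cont: "continuous_on UNIV f" using lin linear_continuous_on linear_conv_bounded_linear by blast
  have fm: "f \<in> borel_measurable borel" using cont borel_measurable_continuous_onI by blast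
  have T: "f -` S \<in> sets borel" using fm S by (simp add: measurable_sets_borel)
  have nf: "\<And>x. norm (f x) = norm x" using f orthogonal_transformation_norm by blast
  have bT: "bounded (f -` S)"
    using b unfolding bounded_iff by (metis nf vimageE)
  have surj: "surj f" using f orthogonal_transformation_surj by blast
  have img: "f ` (f -` S) = S" using surj by (simp add: surj_image_vimage_eq)
  have Tl: "f -` S \<in> lmeasurable"
    using T bT by (simp add: bounded_set_imp_lmeasurable)
  have Sl: "S \<in> lmeasurable"
    using S b by (simp add: bounded_set_imp_lmeasurable)
  have "measure lebesgue S = measure lebesgue (f -` S)"
    using measure_orthogonal_image[OF f Tl] img by simp
  moreover have "emeasure lborel S = emeasure lebesgue S" using S by simp
  moreover have "emeasure lborel (f -` S) = emeasure lebesgue (f -` S)" using T by simp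
  ultimately show ?thesis using Tl Sl
    by (metis emeasure_eq_measure2 fmeasurableD2)
qed

lemma orth_meas: "orthogonal_transformation (f::real^3\<Rightarrow>real^3) \<Longrightarrow> f \<in> borel_measurable borel"
  by (meson borel_measurable_continuous_onI linear_conv_bounded_linear linear_continuous_on orthogonal_transformation_linear)

lemma UM_orth:
  assumes f: "orthogonal_transformation (f::real^3\<Rightarrow>real^3)"
  shows "distr UM borel f = UM"
proof (rule measure_eqI)
  show "sets (distr UM borel f) = sets UM" by simp
  fix A assume "A \<in> sets (distr UM borel f)"
  then have A: "A \<in> sets borel" by simp
  have fm: "f \<in> measurable UM borel" using orth_meas[OF f] by (simp add: measurable_def)
  have nf: "\<And>x. norm (f x) = norm x" using f orthogonal_transformation_norm by blast
  have eq: "ball 0 1 \<inter> f -` A = f -` (ball 0 1 \<inter> A)" using nf by auto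
  have "emeasure (distr UM borel f) A = emeasure UM (f -` A)"
    using fm A by (simp add: emeasure_distr)
  also have "\<dots> = emeasure lborel (ball 0 1 \<inter> f -` A) / emeasure lborel (ball (0::real^3) 1)"
    unfolding UM_def using A orth_meas[OF f] by (subst emeasure_uniform_measure) (auto simp: measurable_sets_borel)
  also have "\<dots> = emeasure lborel (ball 0 1 \<inter> A) / emeasure lborel (ball (0::real^3) 1)"
    unfolding eq using A by (subst lborel_orth_preimage[OF f]) auto
  also have "\<dots> = emeasure UM A" unfolding UM_def using A by simp
  finally show "emeasure (distr UM borel f) A = emeasure UM A" .
qed

lemma UM_orth_int:
  assumes f: "orthogonal_transformation (f::real^3\<Rightarrow>real^3)" and h: "h \<in> borel_measurable borel"
  shows "(\<integral>v. h (f v) \<partial>UM) = (\<integral>v. (h v :: real) \<partial>UM)"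
proof -
  have fm: "f \<in> measurable UM borel" using orth_meas[OF f] by (simp add: measurable_def)
  have "(\<integral>v. h (f v) \<partial>UM) = integral\<^sup>L (distr UM borel f) h"
    using fm h by (simp add: integral_distr)
  then show ?thesis using UM_orth[OF f] by simp
qed

lemma orth_sgn: "orthogonal_transformation f \<Longrightarrow> sgn (f v) = f (sgn v)"
  by (simp add: sgn_div_norm orthogonal_transformation_scaleR orthogonal_transformation_norm)

lemma orth_inner: "orthogonal_transformation f \<Longrightarrow> f v \<bullet> f w = v \<bullet> w"
  by (simp add: orthogonal_transformation_def)

lemma UM_neg_int:
  assumes h: "h \<in> borel_measurable borel"
  shows "(\<integral>v. h (- v) \<partial>UM) = (\<integral>v. (h v :: real) \<partial>UM)"
  using UM_orth_int[of "\<lambda>v. - v" h] h orthogonal_transformation_neg[of "\<lambda>x. x"] by simp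

definition e3 :: "real^3" where "e3 = axis 3 1"

lemma norm_e3[simp]: "norm e3 = 1" by (simp add: e3_def)

lemma UM_unit_int:
  assumes u: "norm u = 1" and phi: "\<phi> \<in> borel_measurable borel"
  shows "(\<integral>v. \<phi> (u \<bullet> sgn v) \<partial>UM) = (\<integral>v. (\<phi> (e3 \<bullet> sgn v) :: real) \<partial>UM)"
proof -
  obtain f where f: "orthogonal_transformation f" "f u = e3"
    using orthogonal_transformation_exists_1[of u e3] u by auto
  have "\<And>v. u \<bullet> sgn v = e3 \<bullet> sgn (f v)"
    using f by (metis orth_inner orth_sgn)
  then have "(\<integral>v. \<phi> (u \<bullet> sgn v) \<partial>UM) = (\<integral>v. (\<lambda>w. \<phi> (e3 \<bullet> sgn w)) (f v) \<partial>UM)" by simp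
  also have "\<dots> = (\<integral>v. \<phi> (e3 \<bullet> sgn v) \<partial>UM)"
    by (rule UM_orth_int[OF f(1)]) (use phi in measurable)
  finally show ?thesis .
qed

lemma UM_integrable:
  assumes h: "h \<in> borel_measurable borel" and b: "\<And>v. \<bar>h v\<bar> \<le> B"
  shows "integrable UM (h :: real^3 \<Rightarrow> real)"
proof -
  interpret prob_space UM by (rule prob_UM)
  show ?thesis
    by (rule integrable_const_bound[of _ B]) (use h b in auto)
qed

lemma abs_inner_sgn_le: "\<bar>u \<bullet> sgn v\<bar> \<le> norm u" for u v :: "real^3"
proof -
  have "\<bar>u \<bullet> sgn v\<bar> \<le> norm u * norm (sgn v)" by (rule Cauchy_Schwarz_ineq2)
  also have "\<dots> \<le> norm u" by (simp add: norm_sgn)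
  finally show ?thesis .
qed

lemma int_odd_zero:
  assumes h: "h \<in> borel_measurable borel" and odd: "\<And>v. h (-v) = - h v"
  shows "(\<integral>v. (h v :: real) \<partial>UM) = 0"
proof -
  have "(\<integral>v. h v \<partial>UM) = (\<integral>v. h (- v) \<partial>UM)" using UM_neg_int[OF h] by simp
  also have "\<dots> = - (\<integral>v. h v \<partial>UM)" by (simp add: odd)
  finally show ?thesis by simp
qed

lemma int_lin_zero: "(\<integral>v. y \<bullet> sgn v \<partial>UM) = 0"
  by (rule int_odd_zero) (auto simp: sgn_minus)

lemma int_sgn_zero: "(\<integral>v. sgn (x \<bullet> sgn v) \<partial>UM) = 0"
  by (rule int_odd_zero) (auto simp: sgn_minus)

lemma int_sgn_abs_zero: "(\<integral>v. sgn (x \<bullet> sgn v) * \<bar>y \<bullet> sgn v\<bar> \<partial>UM) = 0"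
  by (rule int_odd_zero) (auto simp: sgn_minus)

definition cc :: real where "cc = (\<integral>v. \<bar>e3 \<bullet> sgn v\<bar> \<partial>UM)"

lemma int_abs_unit: "norm u = 1 \<Longrightarrow> (\<integral>v. \<bar>u \<bullet> sgn v\<bar> \<partial>UM) = cc"
  unfolding cc_def by (rule UM_unit_int) auto

lemma AE_UM_nz: "AE v in UM. v \<noteq> 0"
proof -
  have "emeasure UM {0} = 0"
    unfolding UM_def by (subst emeasure_uniform_measure) (auto simp: Int_absorb1)
  then show ?thesis by (intro AE_I[of _ _ "{0}"]) auto
qed

lemma cc_ge: "cc \<ge> 1/3"
proof -
  let ?q = "\<lambda>i v. ((axis i 1 :: real^3) \<bullet> sgn v)^2"
  have qi: "(\<integral>v. ?q i v \<partial>UM) = (\<integral>v. (e3 \<bullet> sgn v)^2 \<partial>UM)" for i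
    by (rule UM_unit_int[where \<phi>="\<lambda>t. t^2"]) auto
  have intq: "integrable UM (?q i)" for i
  proof (rule UM_integrable[of _ 1])
    fix v :: "real^3"
    have "\<bar>axis i 1 \<bullet> sgn v\<bar> \<le> 1" using abs_inner_sgn_le[of "axis i 1" v] by simp
    then show "\<bar>?q i v\<bar> \<le> 1" by (simp add: abs_square_le_1)
  qed auto
  have "AE v in UM. ?q 1 v + ?q 2 v + ?q 3 v = 1"
    using AE_UM_nz
  proof (rule AE_mp, intro AE_I2 impI)
    fix v :: "real^3" assume "v \<noteq> 0"
    have "?q 1 v + ?q 2 v + ?q 3 v = sgn v \<bullet> sgn v"
      by (simp add: inner_vec_def sum_3 power2_eq_square axis_def)
    also have "\<dots> = 1" using \<open>v \<noteq> 0\<close> by (simp add: norm_sgn flip: power2_norm_eq_inner)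
    finally show "?q 1 v + ?q 2 v + ?q 3 v = 1" .
  qed
  then have "(\<integral>v. ?q 1 v + ?q 2 v + ?q 3 v \<partial>UM) = (\<integral>v. 1 \<partial>UM)"
    by (intro integral_cong_AE) auto
  also have "\<dots> = 1" using prob_UM prob_space.prob_space[of UM] by simp
  finally have "(\<integral>v. ?q 1 v \<partial>UM) + (\<integral>v. ?q 2 v \<partial>UM) + (\<integral>v. ?q 3 v \<partial>UM) = 1"
    using intq by (simp add: integral_add)
  then have e: "(\<integral>v. (e3 \<bullet> sgn v)^2 \<partial>UM) = 1/3" using qi by simp
  have "(\<integral>v. (e3 \<bullet> sgn v)^2 \<partial>UM) \<le> cc"
    unfolding cc_def
  proof (rule integral_mono)
    show "integrable UM (\<lambda>v. (e3 \<bullet> sgn v)^2)"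
      by (rule UM_integrable[of _ 1]) (use abs_inner_sgn_le[of e3] in \<open>auto simp: abs_square_le_1\<close>)
    show "integrable UM (\<lambda>v. \<bar>e3 \<bullet> sgn v\<bar>)"
      by (rule UM_integrable[of _ 1]) (use abs_inner_sgn_le[of e3] in auto)
    fix v :: "real^3"
    have "\<bar>e3 \<bullet> sgn v\<bar> \<le> 1" using abs_inner_sgn_le[of e3 v] by simp
    then show "(e3 \<bullet> sgn v)^2 \<le> \<bar>e3 \<bullet> sgn v\<bar>"
      by (metis abs_ge_zero mult_left_le power2_abs power2_eq_square)
  qed
  then show ?thesis using e by simp
qed

lemma abs_sgn_mult_le: "\<bar>sgn (t::real) * s\<bar> \<le> \<bar>s\<bar>"
  by (simp add: sgn_real_def abs_mult)

lemma int_anti_zero: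
  assumes f: "orthogonal_transformation f" and h: "h \<in> borel_measurable borel"
    and odd: "\<And>v. h (f v) = - h v"
  shows "(\<integral>v. (h v :: real) \<partial>UM) = 0"
proof -
  have "(\<integral>v. h v \<partial>UM) = (\<integral>v. h (f v) \<partial>UM)" using UM_orth_int[OF f h] by simp
  also have "\<dots> = - (\<integral>v. h v \<partial>UM)" by (simp add: odd)
  finally show ?thesis by simp
qed

lemma refl_orth:
  fixes z :: "real^3"
  assumes "z \<noteq> 0"
  shows "orthogonal_transformation (\<lambda>w. w - (2 * (z \<bullet> w) / (z \<bullet> z)) *\<^sub>R z)"
  unfolding orthogonal_transformation_def
proof
  show "linear (\<lambda>w. w - (2 * (z \<bullet> w) / (z \<bullet> z)) *\<^sub>R z)"
    by (rule linearI) (auto simp: inner_add_right inner_scaleR_right add_divide_distrib scaleR_add_left algebra_simps)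
  have zz: "z \<bullet> z \<noteq> 0" using assms by simp
  show "\<forall>v w. (v - (2 * (z \<bullet> v) / (z \<bullet> z)) *\<^sub>R z) \<bullet> (w - (2 * (z \<bullet> w) / (z \<bullet> z)) *\<^sub>R z) = v \<bullet> w"
    using zz by (auto simp: inner_diff_left inner_diff_right inner_commute field_simps)
qed

lemma int_sgn_lin:
  assumes x: "norm x = 1"
  shows "(\<integral>v. sgn (x \<bullet> sgn v) * (y \<bullet> sgn v) \<partial>UM) = cc * (x \<bullet> y)"
proof -
  define z where "z = y - (x \<bullet> y) *\<^sub>R x"
  have xx: "x \<bullet> x = 1" using x by (simp add: power2_norm_eq_inner[symmetric])
  have xz: "x \<bullet> z = 0" unfolding z_def using xx by (simp add: inner_diff_right)
  have pw: "sgn (x \<bullet> sgn v) * (y \<bullet> sgn v) = (x \<bullet> y) * \<bar>x \<bullet> sgn v\<bar> + sgn (x \<bullet> sgn v) * (z \<bullet> sgn v)" for v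
  proof -
    have "y \<bullet> sgn v = (x \<bullet> y) * (x \<bullet> sgn v) + z \<bullet> sgn v"
      unfolding z_def by (simp add: inner_diff_left)
    moreover have "\<And>t::real. t * sgn t = \<bar>t\<bar>" by (simp add: sgn_real_def)
    ultimately show ?thesis by (simp add: algebra_simps)
  qed
  have z0: "(\<integral>v. sgn (x \<bullet> sgn v) * (z \<bullet> sgn v) \<partial>UM) = 0"
  proof (cases "z = 0")
    case True then show ?thesis by simp
  next
    case False
    let ?R = "\<lambda>w. w - (2 * (z \<bullet> w) / (z \<bullet> z)) *\<^sub>R z"
    have R: "orthogonal_transformation ?R" by (rule refl_orth[OF False])
    have zz: "z \<bullet> z \<noteq> 0" using False by simp
    show ?thesis
    proof (rule int_anti_zero[OF R])
      fix v
      have "sgn (?R v) = ?R (sgn v)" by (rule orth_sgn[OF R])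
      moreover have "x \<bullet> ?R w = x \<bullet> w" for w using xz by (simp add: inner_diff_right)
      moreover have "z \<bullet> ?R w = - (z \<bullet> w)" for w using zz by (simp add: inner_diff_right)
      ultimately show "sgn (x \<bullet> sgn (?R v)) * (z \<bullet> sgn (?R v)) = - (sgn (x \<bullet> sgn v) * (z \<bullet> sgn v))"
        by simp
    qed measurable
  qed
  have i1: "integrable UM (\<lambda>v. (x \<bullet> y) * \<bar>x \<bullet> sgn v\<bar>)"
    by (rule UM_integrable[of _ "\<bar>x \<bullet> y\<bar>"]) (use abs_inner_sgn_le[of x] x in \<open>auto simp: abs_mult mult_left_le\<close>)
  have i2: "integrable UM (\<lambda>v. sgn (x \<bullet> sgn v) * (z \<bullet> sgn v))"
  proof (rule UM_integrable[of _ "norm z"])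
    fix v :: "real^3"
    show "\<bar>sgn (x \<bullet> sgn v) * (z \<bullet> sgn v)\<bar> \<le> norm z"
      using abs_inner_sgn_le[of z v] abs_sgn_mult_le[of "x \<bullet> sgn v" "z \<bullet> sgn v"] by linarith
  qed measurable
  have "(\<integral>v. sgn (x \<bullet> sgn v) * (y \<bullet> sgn v) \<partial>UM) = (\<integral>v. (x \<bullet> y) * \<bar>x \<bullet> sgn v\<bar> + sgn (x \<bullet> sgn v) * (z \<bullet> sgn v) \<partial>UM)"
    by (simp add: pw)
  also have "\<dots> = (x \<bullet> y) * cc"
    using i1 i2 z0 int_abs_unit[OF x] by (simp add: integral_add)
  finally show ?thesis by simp
qed




lemma sum_UNIV_22: "(\<Sum>p\<in>(UNIV::(2\<times>2) set). f p) = f (1,1) + f (1,2) + f (2,1) + f (2,2)"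
proof -
  have "(UNIV::(2\<times>2) set) = UNIV \<times> UNIV" by simp
  then have "(\<Sum>p\<in>(UNIV::(2\<times>2) set). f p) = (\<Sum>i\<in>UNIV. \<Sum>j\<in>UNIV. f (i,j))"
    by (simp add: sum.cartesian_product)
  then show ?thesis by (simp add: sum_2 add.assoc)
qed

lemma bell_corr_expand:
  "bell_corr A B = (A$1$1*B$1$1 + A$1$2*B$1$2 + A$2$1*B$2$1 + A$2$2*B$2$2)/2"
proof -
  have s: "cnj (complex_of_real (1 / sqrt 2)) * complex_of_real (1 / sqrt 2) = 1/2"
    by (simp flip: of_real_mult)
  show ?thesis
    unfolding bell_corr_def braket_def kron_def phi_plus_def matrix_vector_mult_def
    by (simp add: sum_UNIV_22 algebra_simps s add_divide_distrib) (simp add: field_simps flip: of_real_mult)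
qed

definition herm :: "qmat \<Rightarrow> bool" where
  "herm M \<longleftrightarrow> M$2$1 = cnj (M$1$2) \<and> Im (M$1$1) = 0 \<and> Im (M$2$2) = 0"

definition b0 :: "qmat \<Rightarrow> real" where "b0 M = Re (M$1$1 + M$2$2) / 2"
definition bv :: "qmat \<Rightarrow> real^3" where
  "bv M = vector [Re (M$1$2), Im (M$1$2), Re (M$1$1 - M$2$2) / 2]"

lemma alice_proj_entries:
  "alice_proj x a $1$1 = complex_of_real ((1 + a * x$3)/2)"
  "alice_proj x a $1$2 = complex_of_real a * (complex_of_real (x$1) - \<i> * complex_of_real (x$2)) / 2"
  "alice_proj x a $2$1 = complex_of_real a * (complex_of_real (x$1) + \<i> * complex_of_real (x$2)) / 2"
  "alice_proj x a $2$2 = complex_of_real ((1 - a * x$3)/2)"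
  by (simp_all add: alice_proj_def pauliX_def pauliY_def pauliZ_def mat_def vector_scaleR_component;
      simp add: complex_eq_iff algebra_simps)+

lemma bell_proj:
  assumes "herm B"
  shows "bell_corr (alice_proj x a) B = complex_of_real ((b0 B + a * (x \<bullet> bv B)) / 2)"
proof -
  obtain p r q where B: "B$1$1 = complex_of_real p" "B$2$2 = complex_of_real r" "B$1$2 = q" "B$2$1 = cnj q"
  proof -
    have "B$1$1 = complex_of_real (Re (B$1$1))" "B$2$2 = complex_of_real (Re (B$2$2))"
      using assms unfolding herm_def by (simp_all add: complex_eq_iff)
    then show ?thesis using that assms unfolding herm_def by blast
  qed
  show ?thesis
    unfolding bell_corr_expand alice_proj_entries b0_def bv_def B
    by (simp add: complex_eq_iff inner_vec_def sum_3 algebra_simps) (simp add: field_simps)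
qed

lemma braket_expand:
  "braket (vector [\<alpha>, \<beta>] :: qvec) ((M::qmat) *v vector [\<alpha>, \<beta>]) =
     cnj \<alpha> * (M$1$1 * \<alpha> + M$1$2 * \<beta>) + cnj \<beta> * (M$2$1 * \<alpha> + M$2$2 * \<beta>)"
  by (simp add: braket_def matrix_vector_mult_def sum_2)

lemma qpsd_herm:
  assumes "qpsd M" shows "herm M"
proof -
  have I: "Im (braket v (M *v v)) = 0" for v using assms unfolding qpsd_def by blast
  have 1: "Im (M$1$1) = 0" using I[of "vector [1,0]"] by (simp add: braket_expand)
  have 2: "Im (M$2$2) = 0" using I[of "vector [0,1]"] by (simp add: braket_expand)
  have 3: "Im (M$1$2) + Im (M$2$1) = 0" using I[of "vector [1,1]"] 1 2 by (simp add: braket_expand)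
  have 4: "Re (M$1$2) - Re (M$2$1) = 0" using I[of "vector [1,\<i>]"] 1 2 by (simp add: braket_expand algebra_simps)
  show ?thesis unfolding herm_def using 1 2 3 4 by (simp add: complex_eq_iff)
qed

lemma qpsd_bound:
  assumes "qpsd M" shows "norm (bv M) \<le> b0 M"
proof -
  have H: "herm M" by (rule qpsd_herm[OF assms])
  define p where "p = Re (M$1$1)"
  define r where "r = Re (M$2$2)"
  define q where "q = M$1$2"
  have B: "M$1$1 = complex_of_real p" "M$2$2 = complex_of_real r" "M$2$1 = cnj q"
    using H unfolding herm_def p_def r_def q_def by (simp_all add: complex_eq_iff)
  have R: "0 \<le> Re (braket v (M *v v))" for v using assms unfolding qpsd_def by blast
  have form: "Re (braket (vector [\<alpha>, \<beta>] :: qvec) (M *v vector [\<alpha>, \<beta>])) =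
       p * ((Re \<alpha>)^2 + (Im \<alpha>)^2) + r * ((Re \<beta>)^2 + (Im \<beta>)^2) + 2 * Re (cnj \<alpha> * q * \<beta>)" for \<alpha> \<beta>
    unfolding braket_expand B q_def[symmetric]
    by (simp add: algebra_simps power2_eq_square)
  have p0: "0 \<le> p" using R[of "vector [1,0]"] form[of 1 0] by simp
  have r0: "0 \<le> r" using R[of "vector [0,1]"] form[of 0 1] by simp
  have qq: "(Re q)^2 + (Im q)^2 \<le> p * r"
  proof -
    have e1: "0 \<le> p * (p * r - ((Re q)^2 + (Im q)^2))"
      using R[of "vector [q, - complex_of_real p]"] form[of q "- complex_of_real p"]
      by (simp add: algebra_simps power2_eq_square)
    have e2: "0 \<le> r * (p * r - ((Re q)^2 + (Im q)^2))"
      using R[of "vector [complex_of_real r, - cnj q]"] form[of "complex_of_real r" "- cnj q"]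
      by (simp add: algebra_simps power2_eq_square)
    have e3: "0 \<le> p + r * ((Re q)^2 + (Im q)^2) - 2 * ((Re q)^2 + (Im q)^2)"
      using R[of "vector [1, - cnj q]"] form[of 1 "- cnj q"]
      by (simp add: algebra_simps power2_eq_square)
    show ?thesis
    proof (cases "p > 0")
      case True then show ?thesis using e1 by (simp add: zero_le_mult_iff)
    next
      case False
      then have "p = 0" using p0 by simp
      show ?thesis
      proof (cases "r > 0")
        case True then show ?thesis using e2 \<open>p = 0\<close> by (simp add: zero_le_mult_iff)
      next
        case False then have "r = 0" using r0 by simp
        then show ?thesis using e3 \<open>p = 0\<close> by simp
      qed
    qed
  qed
  have "(norm (bv M))^2 = (Re q)^2 + (Im q)^2 + ((p - r)/2)^2"
    unfolding bv_def B q_def[symmetric] by (simp add: norm_vec_def L2_set_def sum_3)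
  also have "\<dots> \<le> ((p + r)/2)^2"
    using qq by (simp add: power2_eq_square field_simps)
  finally have "(norm (bv M))^2 \<le> ((p + r)/2)^2" .
  moreover have "b0 M = (p + r)/2" unfolding b0_def B by simp
  ultimately show ?thesis using p0 r0 by (simp add: power2_le_iff_abs_le)
qed

lemma b0_scale[simp]: "b0 (c *\<^sub>R M) = c * b0 M"
  by (simp add: b0_def vector_scaleR_component field_simps)
lemma bv_scale[simp]: "bv (c *\<^sub>R M) = c *\<^sub>R bv M"
  by (simp add: bv_def vector_scaleR_component vec_eq_iff forall_3 field_simps)
lemma herm_scale: "herm M \<Longrightarrow> herm (c *\<^sub>R M)"
  by (simp add: herm_def vector_scaleR_component)
lemma b0_one[simp]: "b0 (mat 1) = 1" by (simp add: b0_def mat_def)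
lemma bv_one[simp]: "bv (mat 1) = 0" by (simp add: bv_def mat_def vec_eq_iff forall_3)
lemma herm_one: "herm (mat 1)" by (simp add: herm_def mat_def)

lemma b0_sum: "b0 (\<Sum>b\<in>A. B b) = (\<Sum>b\<in>A. b0 (B b))"
  by (induction A rule: infinite_finite_induct) (auto simp: b0_def field_simps)
lemma bv_sum: "bv (\<Sum>b\<in>A. B b) = (\<Sum>b\<in>A. bv (B b))"
  by (induction A rule: infinite_finite_induct) (auto simp: bv_def vec_eq_iff forall_3 field_simps)

lemma povm_sums:
  assumes "is_povm m B"
  shows "(\<Sum>b<m. b0 (B b)) = 1" "(\<Sum>b<m. bv (B b)) = 0"
  using assms b0_sum[of B "{..<m}"] bv_sum[of B "{..<m}"] unfolding is_povm_def by auto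




lemma UM_const[simp]: "integrable UM (\<lambda>v. c::real)"
proof -
  interpret prob_space UM by (rule prob_UM)
  show ?thesis by simp
qed

lemma UM_prob1[simp]: "measure UM UNIV = 1"
  using prob_UM prob_space.prob_space[of UM] by simp

lemma UM_int_const[simp]: "(\<integral>v. c \<partial>UM) = (c::real)"
  by simp

lemma cc_le: "cc \<le> 1"
proof -
  interpret prob_space UM by (rule prob_UM)
  have "cc \<le> (\<integral>v. 1 \<partial>UM)"
    unfolding cc_def
  proof (rule integral_mono)
    show "integrable UM (\<lambda>v. \<bar>e3 \<bullet> sgn v\<bar>)"
      by (rule UM_integrable[of _ 1]) (use abs_inner_sgn_le[of e3] in auto)
    show "\<And>v. \<bar>e3 \<bullet> sgn v\<bar> \<le> 1" using abs_inner_sgn_le[of e3] by simp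
  qed auto
  then show ?thesis by simp
qed

lemma int_abs_gen: "(\<integral>v. \<bar>y \<bullet> sgn v\<bar> \<partial>UM) = cc * norm y"
proof (cases "y = 0")
  case True then show ?thesis by simp
next
  case False
  define u where "u = sgn y"
  have u: "norm u = 1" using False by (simp add: u_def norm_sgn)
  have y: "y = norm y *\<^sub>R u" using False by (simp add: u_def sgn_div_norm)
  have "\<And>v. \<bar>y \<bullet> sgn v\<bar> = norm y * \<bar>u \<bullet> sgn v\<bar>"
    by (subst y) (simp add: abs_mult)
  then have "(\<integral>v. \<bar>y \<bullet> sgn v\<bar> \<partial>UM) = norm y * (\<integral>v. \<bar>u \<bullet> sgn v\<bar> \<partial>UM)" by simp
  then show ?thesis using int_abs_unit[OF u] by simp
qed

lemma ib1: "integrable UM (\<lambda>v. \<bar>y \<bullet> sgn v\<bar>)"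
  by (rule UM_integrable[of _ "norm y"]) (use abs_inner_sgn_le[of y] in auto)
lemma ib2: "integrable UM (\<lambda>v. y \<bullet> sgn v)"
  by (rule UM_integrable[of _ "norm y"]) (use abs_inner_sgn_le[of y] in auto)
lemma ib3: "integrable UM (\<lambda>v. sgn (x \<bullet> sgn v))"
  by (rule UM_integrable[of _ 1]) (auto simp: sgn_real_def)
lemma ib4: "integrable UM (\<lambda>v. sgn (x \<bullet> sgn v) * \<bar>y \<bullet> sgn v\<bar>)"
proof (rule UM_integrable[of _ "norm y"])
  fix v :: "real^3"
  show "\<bar>sgn (x \<bullet> sgn v) * \<bar>y \<bullet> sgn v\<bar>\<bar> \<le> norm y"
    using abs_inner_sgn_le[of y v] abs_sgn_mult_le[of "x \<bullet> sgn v" "\<bar>y \<bullet> sgn v\<bar>"] by simp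
qed measurable
lemma ib5: "integrable UM (\<lambda>v. sgn (x \<bullet> sgn v) * (y \<bullet> sgn v))"
proof (rule UM_integrable[of _ "norm y"])
  fix v :: "real^3"
  show "\<bar>sgn (x \<bullet> sgn v) * (y \<bullet> sgn v)\<bar> \<le> norm y"
    using abs_inner_sgn_le[of y v] abs_sgn_mult_le[of "x \<bullet> sgn v" "y \<bullet> sgn v"] by linarith
qed measurable

definition clk :: "real \<Rightarrow> real \<Rightarrow> real^3 \<Rightarrow> real^3 \<Rightarrow> real" where
  "clk \<eta> \<beta> y v = \<eta> * (\<beta> - norm y) + (\<eta> / cc) * (\<bar>y \<bullet> sgn v\<bar> + y \<bullet> sgn v)"

lemma clk_meas[measurable]: "clk \<eta> \<beta> y \<in> borel_measurable borel"
  unfolding clk_def by measurable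

lemma clk_int: "integrable UM (clk \<eta> \<beta> y)"
  unfolding clk_def
  by (rule Bochner_Integration.integrable_add[OF UM_const integrable_mult_right[OF Bochner_Integration.integrable_add[OF ib1 ib2]]])

lemma clk_sgn_int: "integrable UM (\<lambda>v. sgn (x \<bullet> sgn v) * clk \<eta> \<beta> y v)"
  unfolding clk_def using ib3[of x] ib4[of x y] ib5[of x y]
  by (simp add: algebra_simps)

lemma cc_pos: "cc > 0" using cc_ge by simp

lemma clk_integral: "(\<integral>v. clk \<eta> \<beta> y v \<partial>UM) = \<eta> * \<beta>"
proof -
  let ?h = "\<lambda>v. \<bar>y \<bullet> sgn v\<bar> + y \<bullet> sgn v"
  have ih: "integrable UM ?h" by (rule Bochner_Integration.integrable_add[OF ib1 ib2])
  have ih2: "integrable UM (\<lambda>v. (\<eta> / cc) * ?h v)" by (rule integrable_mult_right[OF ih])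
  have "(\<integral>v. clk \<eta> \<beta> y v \<partial>UM) = (\<integral>v. \<eta> * (\<beta> - norm y) \<partial>UM) + (\<integral>v. (\<eta> / cc) * ?h v \<partial>UM)"
    unfolding clk_def by (rule Bochner_Integration.integral_add[OF UM_const ih2])
  also have "\<dots> = \<eta> * (\<beta> - norm y) + (\<eta> / cc) * ((\<integral>v. \<bar>y \<bullet> sgn v\<bar> \<partial>UM) + (\<integral>v. y \<bullet> sgn v \<partial>UM))"
    by (simp add: Bochner_Integration.integral_add[OF ib1 ib2])
  also have "\<dots> = \<eta> * \<beta>" using int_abs_gen[of y] int_lin_zero[of y] cc_pos by (simp add: field_simps)
  finally show ?thesis .
qed

lemma clk_sgn_integral:
  assumes "norm x = 1"
  shows "(\<integral>v. sgn (x \<bullet> sgn v) * clk \<eta> \<beta> y v \<partial>UM) = \<eta> * (x \<bullet> y)"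
proof -
  have "(\<lambda>v. sgn (x \<bullet> sgn v) * clk \<eta> \<beta> y v) = (\<lambda>v. \<eta> * (\<beta> - norm y) * sgn (x \<bullet> sgn v) +
      (\<eta> / cc) * (sgn (x \<bullet> sgn v) * \<bar>y \<bullet> sgn v\<bar>) + (\<eta> / cc) * (sgn (x \<bullet> sgn v) * (y \<bullet> sgn v)))"
    unfolding clk_def by (simp add: fun_eq_iff algebra_simps)
  then have "(\<integral>v. sgn (x \<bullet> sgn v) * clk \<eta> \<beta> y v \<partial>UM) = \<eta> * (\<beta> - norm y) * (\<integral>v. sgn (x \<bullet> sgn v) \<partial>UM) +
      (\<eta> / cc) * (\<integral>v. sgn (x \<bullet> sgn v) * \<bar>y \<bullet> sgn v\<bar> \<partial>UM) + (\<eta> / cc) * (\<integral>v. sgn (x \<bullet> sgn v) * (y \<bullet> sgn v) \<partial>UM)"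
    using ib3[of x] ib4[of x y] ib5[of x y] by simp
  also have "\<dots> = \<eta> * (x \<bullet> y)"
    using int_sgn_zero[of x] int_sgn_abs_zero[of x y] int_sgn_lin[OF assms, of y] cc_pos by simp
  finally show ?thesis .
qed




lemma sum_lossy: "(\<Sum>ob\<in>lossy_outcomes m. f ob) = f None + (\<Sum>b<m. f (Some b))"
proof -
  have "None \<notin> Some ` {..<m}" by auto
  then have "(\<Sum>ob\<in>lossy_outcomes m. f ob) = f None + (\<Sum>ob\<in>Some ` {..<m}. f ob)"
    unfolding lossy_outcomes_def by (simp add: sum.insert)
  also have "(\<Sum>ob\<in>Some ` {..<m}. f ob) = (\<Sum>b<m. f (Some b))"
    by (subst sum.reindex) auto
  finally show ?thesis .
qed

lemma pA_clk_int:
  "integrable UM (\<lambda>v. (1 + a * sgn (x \<bullet> sgn v)) / 2 * clk \<eta> \<beta> y v)"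
proof -
  have e: "(\<lambda>v. (1 + a * sgn (x \<bullet> sgn v)) / 2 * clk \<eta> \<beta> y v) =
      (\<lambda>v. (1/2) * clk \<eta> \<beta> y v + (a/2) * (sgn (x \<bullet> sgn v) * clk \<eta> \<beta> y v))"
    by (simp add: fun_eq_iff field_simps)
  show ?thesis unfolding e
    by (rule Bochner_Integration.integrable_add[OF integrable_mult_right[OF clk_int] integrable_mult_right[OF clk_sgn_int]])
qed

lemma pA_clk_integral:
  assumes "norm x = 1"
  shows "(\<integral>v. (1 + a * sgn (x \<bullet> sgn v)) / 2 * clk \<eta> \<beta> y v \<partial>UM) = \<eta> * \<beta> / 2 + a * \<eta> * (x \<bullet> y) / 2"
proof -
  have e: "(\<lambda>v. (1 + a * sgn (x \<bullet> sgn v)) / 2 * clk \<eta> \<beta> y v) =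
      (\<lambda>v. (1/2) * clk \<eta> \<beta> y v + (a/2) * (sgn (x \<bullet> sgn v) * clk \<eta> \<beta> y v))"
    by (simp add: fun_eq_iff field_simps)
  show ?thesis unfolding e
    by (subst Bochner_Integration.integral_add[OF integrable_mult_right[OF clk_int] integrable_mult_right[OF clk_sgn_int]])
       (simp add: clk_integral clk_sgn_integral[OF assms])
qed

lemma pA_int: "integrable UM (\<lambda>v. (1 + a * sgn (x \<bullet> sgn v)) / 2)"
  by (rule UM_integrable[of _ "(1 + \<bar>a\<bar>)/2"]) (auto simp: sgn_real_def abs_mult)

lemma pA_integral: "(\<integral>v. (1 + a * sgn (x \<bullet> sgn v)) / 2 \<partial>UM) = 1/2"
proof -
  have e: "(\<lambda>v. (1 + a * sgn (x \<bullet> sgn v)) / 2) = (\<lambda>v. 1/2 + (a/2) * sgn (x \<bullet> sgn v))"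
    by (simp add: fun_eq_iff field_simps)
  show ?thesis unfolding e
    by (subst Bochner_Integration.integral_add[OF UM_const integrable_mult_right[OF ib3]])
       (simp add: int_sgn_zero)
qed

lemma clk_nonneg:
  assumes "0 \<le> \<eta>" "norm y \<le> \<beta>"
  shows "0 \<le> clk \<eta> \<beta> y v"
proof -
  have "0 \<le> \<eta> * (\<beta> - norm y)" using assms by simp
  moreover have "0 \<le> (\<eta> / cc) * (\<bar>y \<bullet> sgn v\<bar> + y \<bullet> sgn v)"
    using assms cc_pos by (intro mult_nonneg_nonneg) auto
  ultimately show ?thesis unfolding clk_def by linarith
qed

lemma clk_sum_le:
  assumes eta: "0 \<le> \<eta>" "\<eta> \<le> 1/3" and P: "is_povm m B"
  shows "(\<Sum>b<m. clk \<eta> (b0 (B b)) (bv (B b)) v) \<le> 1"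
proof -
  define N where "N = (\<Sum>b<m. norm (bv (B b)))"
  define S where "S = (\<Sum>b<m. \<bar>bv (B b) \<bullet> sgn v\<bar>)"
  have s1: "(\<Sum>b<m. b0 (B b)) = 1" and s2: "(\<Sum>b<m. bv (B b)) = 0" using povm_sums[OF P] by auto
  have bd: "\<And>b. b < m \<Longrightarrow> norm (bv (B b)) \<le> b0 (B b)"
    using P qpsd_bound unfolding is_povm_def by blast
  have N1: "N \<le> 1" unfolding N_def using s1 bd by (metis lessThan_iff sum_mono)
  have SN: "S \<le> N" unfolding S_def N_def by (intro sum_mono) (use abs_inner_sgn_le in auto)
  have S0: "0 \<le> S" unfolding S_def by (simp add: sum_nonneg)
  have lin: "(\<Sum>b<m. bv (B b) \<bullet> sgn v) = 0" using s2 by (simp add: inner_sum_left[symmetric])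
  have "(\<Sum>b<m. clk \<eta> (b0 (B b)) (bv (B b)) v) = \<eta> * (1 - N) + (\<eta> / cc) * S"
    unfolding clk_def N_def S_def using s1 lin
    by (simp add: sum.distrib sum_subtractf sum_distrib_left[symmetric] right_diff_distrib)
       (simp add: sum_divide_distrib[symmetric] sum_distrib_left[symmetric] sum.distrib)
  also have "\<dots> \<le> \<eta> * (1 - N) + (\<eta> / cc) * N"
    using SN eta cc_pos by (intro add_left_mono mult_left_mono) auto
  also have "\<dots> \<le> (\<eta> / cc) * (1 - N) + (\<eta> / cc) * N"
  proof -
    have "\<eta> \<le> \<eta> / cc" using cc_pos cc_le eta by (simp add: le_divide_eq mult_left_le)
    then show ?thesis using N1 by (intro add_right_mono mult_right_mono) auto
  qed
  also have "\<dots> = \<eta> / cc" by (simp add: algebra_simps add_divide_distrib[symmetric])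
  also have "\<dots> \<le> 1" using cc_ge cc_pos eta by (simp add: divide_le_eq)
  finally show ?thesis .
qed




lemma core:
  fixes SA :: "'s set" and Aop :: "'s \<Rightarrow> real \<Rightarrow> qmat" and xs :: "'s \<Rightarrow> real^3"
  assumes eta: "0 \<le> \<eta>" "\<eta> \<le> 1/3"
    and xs: "\<And>s. s \<in> SA \<Longrightarrow> norm (xs s) = 1"
    and A: "\<And>s a M. s \<in> SA \<Longrightarrow> herm M \<Longrightarrow>
              bell_corr (Aop s a) M = complex_of_real ((b0 M + a * (xs s \<bullet> bv M)) / 2)"
  shows "lhv_lossy SA Aop \<eta>"
proof -
  define pA :: "'s \<Rightarrow> real \<Rightarrow> real^3 \<Rightarrow> real" where
    "pA s a v = (1 + a * sgn (xs s \<bullet> sgn v)) / 2" for s a v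
  define ck :: "(nat \<Rightarrow> qmat) \<Rightarrow> nat \<Rightarrow> real^3 \<Rightarrow> real" where
    "ck B b v = clk \<eta> (b0 (B b)) (bv (B b)) v" for B b v
  define pB :: "nat \<Rightarrow> (nat \<Rightarrow> qmat) \<Rightarrow> nat option \<Rightarrow> real^3 \<Rightarrow> real" where
    "pB m B ob v = (case ob of Some b \<Rightarrow> ck B b v | None \<Rightarrow> 1 - (\<Sum>b<m. ck B b v))" for m B ob v
  have ck_meas: "ck B b \<in> borel_measurable UM" for B b
    unfolding ck_def by measurable
  have pB_meas: "pB m B ob \<in> borel_measurable UM" for m B ob
    using ck_meas by (cases ob) (auto simp: pB_def[abs_def])
  have pA_meas: "pA s a \<in> borel_measurable UM" for s a
    unfolding pA_def by measurable
  have P1: "\<forall>s\<in>SA. (\<forall>a\<in>{1, -1}. pA s a \<in> borel_measurable UM) \<and>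
         (\<forall>l\<in>space UM. (\<forall>a\<in>{1, -1}. 0 \<le> pA s a l) \<and> pA s 1 l + pA s (-1) l = 1)"
    using pA_meas by (auto simp: pA_def sgn_real_def)
  have P2: "\<forall>m B. is_povm m B \<longrightarrow>
         (\<forall>ob\<in>lossy_outcomes m. pB m B ob \<in> borel_measurable UM) \<and>
         (\<forall>l\<in>space UM. (\<forall>ob\<in>lossy_outcomes m. 0 \<le> pB m B ob l) \<and>
                       (\<Sum>ob\<in>lossy_outcomes m. pB m B ob l) = 1)"
  proof (intro allI impI conjI ballI)
    fix m B ob l assume P: "is_povm m B"
    show "pB m B ob \<in> borel_measurable UM" by (rule pB_meas)
    show "(\<Sum>ob\<in>lossy_outcomes m. pB m B ob l) = 1"
      unfolding sum_lossy by (simp add: pB_def)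
    assume ob: "ob \<in> lossy_outcomes m"
    show "0 \<le> pB m B ob l"
    proof (cases ob)
      case None
      then show ?thesis using clk_sum_le[OF eta P, of l] by (simp add: pB_def ck_def)
    next
      case (Some b)
      then have "b < m" using ob by (auto simp: lossy_outcomes_def)
      then have "norm (bv (B b)) \<le> b0 (B b)" using P qpsd_bound unfolding is_povm_def by blast
      then show ?thesis using Some clk_nonneg[OF eta(1)] by (simp add: pB_def ck_def)
    qed
  qed
  have P3: "\<forall>s\<in>SA. \<forall>a\<in>{1, -1}. \<forall>m B. is_povm m B \<longrightarrow> (\<forall>ob\<in>lossy_outcomes m.
         bell_corr (Aop s a) (lossy \<eta> B ob) =
           complex_of_real (\<integral>l. pA s a l * pB m B ob l \<partial>UM))"
  proof (intro ballI allI impI)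
    fix s a m B ob assume s: "s \<in> SA" and a: "a \<in> {1, -1::real}" and P: "is_povm m B"
      and ob: "ob \<in> lossy_outcomes m"
    have x: "norm (xs s) = 1" by (rule xs[OF s])
    have hB: "\<And>b. b < m \<Longrightarrow> herm (B b)" using P qpsd_herm unfolding is_povm_def by blast
    have Sc: "(\<integral>l. pA s a l * ck B b l \<partial>UM) = \<eta> * b0 (B b) / 2 + a * \<eta> * (xs s \<bullet> bv (B b)) / 2" for b
      unfolding pA_def ck_def by (rule pA_clk_integral[OF x])
    show "bell_corr (Aop s a) (lossy \<eta> B ob) = complex_of_real (\<integral>l. pA s a l * pB m B ob l \<partial>UM)"
    proof (cases ob)
      case (Some b)
      then have "b < m" using ob by (auto simp: lossy_outcomes_def)
      then have "bell_corr (Aop s a) (lossy \<eta> B ob) = complex_of_real ((\<eta> * b0 (B b) + a * (xs s \<bullet> (\<eta> *\<^sub>R bv (B b)))) / 2)"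
        using A[OF s herm_scale[OF hB]] Some by (simp add: lossy_def)
      also have "\<dots> = complex_of_real (\<integral>l. pA s a l * pB m B ob l \<partial>UM)"
      proof -
        have "(\<eta> * b0 (B b) + a * (xs s \<bullet> (\<eta> *\<^sub>R bv (B b)))) / 2 = (\<integral>l. pA s a l * pB m B ob l \<partial>UM)"
          using Some Sc[of b] by (simp add: pB_def field_simps)
        then show ?thesis by simp
      qed
      finally show ?thesis .
    next
      case None
      have "bell_corr (Aop s a) (lossy \<eta> B ob) = complex_of_real ((1 - \<eta>) / 2)"
        using A[OF s herm_scale[OF herm_one]] None by (simp add: lossy_def)
      also have "(1 - \<eta>) / 2 = (\<integral>l. pA s a l * pB m B ob l \<partial>UM)"
      proof -
        have ints: "integrable UM (\<lambda>l. pA s a l * ck B b l)" for b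
          unfolding pA_def ck_def by (rule pA_clk_int)
        have intA: "integrable UM (pA s a)" unfolding pA_def by (rule pA_int)
        have e: "(\<lambda>l. pA s a l * pB m B ob l) = (\<lambda>l. pA s a l - (\<Sum>b<m. pA s a l * ck B b l))"
          using None by (simp add: pB_def fun_eq_iff right_diff_distrib sum_distrib_left)
        have "(\<integral>l. pA s a l * pB m B ob l \<partial>UM) = (\<integral>l. pA s a l \<partial>UM) - (\<Sum>b<m. \<integral>l. pA s a l * ck B b l \<partial>UM)"
          unfolding e
          by (subst Bochner_Integration.integral_diff[OF intA Bochner_Integration.integrable_sum[OF ints]])
             (simp add: Bochner_Integration.integral_sum[OF ints])
        also have "\<dots> = 1/2 - (\<Sum>b<m. \<eta> * b0 (B b) / 2 + a * \<eta> * (xs s \<bullet> bv (B b)) / 2)"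
        proof -
          have "(\<integral>l. pA s a l \<partial>UM) = 1/2" unfolding pA_def by (rule pA_integral)
          then show ?thesis using Sc by simp
        qed
        also have "\<dots> = 1/2 - (\<eta> / 2 * (\<Sum>b<m. b0 (B b)) + a * \<eta> / 2 * (xs s \<bullet> (\<Sum>b<m. bv (B b))))"
          by (simp add: sum.distrib sum_distrib_left inner_sum_right sum_divide_distrib)
        also have "\<dots> = (1 - \<eta>) / 2" using povm_sums[OF P] by simp
        finally show ?thesis by simp
      qed
      finally show ?thesis .
    qed
  qed
  show ?thesis unfolding lhv_lossy_def
    by (intro exI[of _ UM] exI[of _ pA] exI[of _ pB] conjI prob_UM P1 P2 P3)
qed




lemma alice_xz_eq: "alice_xz \<phi> a = alice_proj (vector [sin \<phi>, 0, cos \<phi>]) a"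
  by (simp add: alice_xz_def alice_proj_def algebra_simps)

lemma norm_xz: "norm (vector [sin \<phi>, 0, cos \<phi>] :: real^3) = 1"
  by (simp add: norm_vec_def L2_set_def sum_3)

theorem mainTheorem15:
  fixes \<eta> :: real
  assumes "0 \<le> \<eta>" and "\<eta> \<le> 1"
  shows "(\<eta> \<le> 1/4 \<longrightarrow> lhv_lossy {x :: real^3. norm x = 1} alice_proj \<eta>)
       \<and> (\<eta> \<le> 1/pi \<longrightarrow> lhv_lossy {0..<2*pi} alice_xz \<eta>)"
proof (intro conjI impI)
  assume "\<eta> \<le> 1/4"
  then show "lhv_lossy {x :: real^3. norm x = 1} alice_proj \<eta>"
    using assms by (intro core[where xs="\<lambda>x. x"]) (auto simp: bell_proj)
next
  assume h: "\<eta> \<le> 1/pi"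
  have "1/pi \<le> 1/3" using pi_gt3 by (intro divide_left_mono) auto
  then have h3: "\<eta> \<le> 1/3" using h by linarith
  show "lhv_lossy {0..<2*pi} alice_xz \<eta>"
    using assms h3
    by (intro core[where xs="\<lambda>\<phi>. vector [sin \<phi>, 0, cos \<phi>]"]) (auto simp: bell_proj alice_xz_eq norm_xz)
qed


end
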